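(* There is a constant $a>0$ such that for all $0<r\le\sqrt2$ and all $x\in[0,1]^2$ with $\|x-c\|\ge r/2$, where $c=(\tfrac12,\tfrac12)$, we have $$\mathrm{area}\big(W(x,c;r)\cap[0,1]^2\cap B(c,\|x-c\|)\big)\ge a\,r^5.$$
   Context: $B(z,\rho)$ denotes the closed Euclidean ball in $\mathbb{R}^2$. For $x,y\in\mathbb{R}^2$ and $r>0$, $W(x,y;r):=\{z\in\mathbb{R}^2: B(z,r)\supseteq B(x,r)\cap B(y,\|x-y\|)\}$. *)

theory Defs
  imports "HOL-Analysis.Analysis"
begin

text \<open>Points of the plane are modelled as real^2; B(z,rho) is the closed ball cball z rho.\<close>

definition W :: "real^2 \<Rightarrow> real^2 \<Rightarrow> real \<Rightarrow> (real^2) set" where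
  "W x y r = {z. cball z r \<supseteq> cball x r \<inter> cball y (norm (x - y))}"

definition unit_square :: "(real^2) set" where
  "unit_square = cbox 0 1"

definition centre :: "real^2" where
  "centre = vector [1/2, 1/2]"

end

theory Submission
  imports Defs
begin


lemma cbox01_measure: "measure lebesgue (cbox (0::real^2) 1) = 1"
proof -
  have "measure lebesgue (cbox (0::real^2) 1) = measure lborel (cbox (0::real^2) 1)"
    by (intro measure_completion) auto
  also have "\<dots> = 1" proof -
    have "(0::real^2) \<in> cbox 0 1" by (simp add: mem_box_cart)
    then have "cbox (0::real^2) 1 \<noteq> {}" by blast
    then show ?thesis by (subst content_cbox_cart) (auto simp: UNIV_2)
  qed
  finally show ?thesis .
qed

lemma det_f: "det (matrix (\<lambda>y::real^2. (m * y$1) *\<^sub>R (D::real^2) + (b * y$2) *\<^sub>R E)) = m*b*(D$1*E$2 - D$2*E$1)"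
  by (simp add: det_2 matrix_def axis_def algebra_simps)

lemma W_closed: "closed (W x y r)"
proof -
  have "W x y r = (\<Inter>p\<in>cball x r \<inter> cball y (norm (x - y)). cball p r)"
    unfolding W_def by (auto simp: dist_commute)
  then show ?thesis by (simp add: closed_INT)
qed


lemma key_W:
  fixes x p D E :: "real^2"
  assumes d: "d > 0" and DD: "D \<bullet> D = d^2" and EE: "E \<bullet> E = d^2" and DE: "D \<bullet> E = 0"
    and r: "r > 0" "r \<le> 2*d"
    and mu: "r^2/(8*d^2) \<le> \<mu>" "\<mu> \<le> r^2/(4*d^2)"
    and nu: "0 \<le> \<nu>" "\<nu> \<le> r^3/(48*d^3)"
    and p1: "norm (p - x) \<le> r" and p2: "norm (p - (x + D)) \<le> d"
  shows "norm (p - (x + \<mu> *\<^sub>R D + \<nu> *\<^sub>R E)) \<le> r"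
proof -
  define w where "w = p - x"
  define q where "q = w \<bullet> w"
  define a where "a = w \<bullet> D"
  define e where "e = w \<bullet> E"
  have nE: "norm E = d" using EE d by (metis norm_eq_sqrt_inner real_sqrt_abs abs_of_pos)
  have q0: "0 \<le> q" unfolding q_def by simp
  have q1: "q \<le> r^2" using p1 unfolding q_def w_def
    by (metis norm_ge_zero power2_norm_eq_inner power_mono)
  have "(w - D) \<bullet> (w - D) \<le> d^2" using p2 d unfolding w_def
    by (metis diff_diff_eq norm_ge_zero power2_norm_eq_inner power_mono)
  then have q2: "q \<le> 2*a" unfolding q_def a_def using DD
    by (simp add: inner_diff_left inner_diff_right inner_commute)
  have "\<bar>e\<bar> \<le> norm w * norm E" unfolding e_def by (rule Cauchy_Schwarz_ineq2)
  also have "\<dots> \<le> r * d" using p1 nE d unfolding w_def by (simp add: mult_right_mono)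
  finally have e1: "\<bar>e\<bar> \<le> r*d" .
  have expand: "(norm (p - (x + \<mu> *\<^sub>R D + \<nu> *\<^sub>R E)))^2 = q - 2*\<mu>*a - 2*\<nu>*e + \<mu>^2*d^2 + \<nu>^2*d^2"
  proof -
    have "p - (x + \<mu> *\<^sub>R D + \<nu> *\<^sub>R E) = w - \<mu> *\<^sub>R D - \<nu> *\<^sub>R E" unfolding w_def by (simp add: algebra_simps)
    then show ?thesis unfolding power2_norm_eq_inner q_def a_def e_def using DD EE DE
      by (simp add: inner_diff_left inner_diff_right inner_commute algebra_simps power2_eq_square)
  qed
  have mu0: "0 \<le> \<mu>" using mu r d by (smt (verit) divide_nonneg_pos zero_le_power2 zero_less_power)
  have mu1: "\<mu> \<le> 1"
  proof -
    have "r^2 \<le> (2*d)^2" using r by (intro power_mono) auto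
    then have "r^2/(4*d^2) \<le> 1" using d by (simp add: power_mult_distrib)
    then show ?thesis using mu by linarith
  qed
  have "\<mu>*q \<le> \<mu>*(2*a)" using q2 mu0 by (rule mult_left_mono)
  then have s1: "-2*\<mu>*a \<le> -\<mu>*q" by simp
  have s2: "(1-\<mu>)*q \<le> (1-\<mu>)*r^2" using q1 mu1 by (simp add: mult_left_mono)
  have "-e \<le> r*d" using e1 by linarith
  then have "\<nu>*(-e) \<le> \<nu>*(r*d)" using nu(1) by (rule mult_left_mono)
  then have s3: "-2*\<nu>*e \<le> 2*\<nu>*(r*d)" by (simp add: mult.commute)
  have s4: "\<mu>^2*d^2 \<le> \<mu>*(r^2/4)"
  proof -
    have "\<mu>*d^2 \<le> r^2/4" using mu d by (simp add: field_simps)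
    then show ?thesis using mu0 by (metis mult.assoc mult_left_mono power2_eq_square)
  qed
  have bd: "r^3/(48*d^3) * d \<le> r"
  proof -
    have "r^2 \<le> (2*d)^2" using r by (intro power_mono) auto
    then have "r^2 \<le> 48*d^2" by (simp add: power_mult_distrib) (smt (verit) zero_le_power2)
    then show ?thesis using r d by (simp add: field_simps power2_eq_square power3_eq_cube)
  qed
  have s5: "\<nu>^2*d^2 \<le> \<nu>*(r*d)"
  proof -
    have "\<nu>*d \<le> r" using nu bd d by (smt (verit) mult_right_mono)
    then have "\<nu>*d*d \<le> r*d" using d by (simp add: mult_right_mono)
    then show ?thesis using nu by (metis mult.assoc mult_left_mono power2_eq_square)
  qed
  have s6: "3*\<nu>*(r*d) \<le> \<mu>*r^2/2"
  proof -
    have "3*\<nu> \<le> 3*(r^3/(48*d^3))" using nu by simp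
    then have "3*\<nu>*(r*d) \<le> 3*(r^3/(48*d^3))*(r*d)" using r d by (intro mult_right_mono) auto
    also have "\<dots> = (r^2/(8*d^2))*r^2/2" using d by (simp add: field_simps power2_eq_square power3_eq_cube)
    also have "\<dots> \<le> \<mu>*r^2/2" using mu(1) by (intro divide_right_mono mult_right_mono) auto
    finally show ?thesis .
  qed
  have "(norm (p - (x + \<mu> *\<^sub>R D + \<nu> *\<^sub>R E)))^2 \<le> r^2"
    proof -
    have e1: "(1-\<mu>)*q = q - \<mu>*q" "(1-\<mu>)*r^2 = r^2 - \<mu>*r^2" "\<mu>*(r^2/4) = (\<mu>*r^2)/4"
      "3*\<nu>*(r*d) = 3*(\<nu>*(r*d))" "2*\<nu>*(r*d) = 2*(\<nu>*(r*d))" "-2*\<nu>*e = -2*(\<nu>*e)" "-2*\<mu>*a = -2*(\<mu>*a)"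
      "- \<mu> * q = -(\<mu>*q)"
      by (auto simp: algebra_simps)
    have "0 \<le> \<mu>*r^2" using mu0 by simp
    then show ?thesis unfolding expand using s1 s2 s3 s4 s5 s6 unfolding e1 by linarith
  qed
  then show ?thesis using power2_le_imp_le[OF _ less_imp_le[OF r(1)]] by blast
qed


lemma centre_nth: "centre $ i = 1/2"
  using exhaust_2[of i] by (auto simp: centre_def)

lemma in_square:
  fixes x E :: "real^2"
  assumes x: "x \<in> unit_square" and nE: "norm E = d" and mu: "0 \<le> \<mu>" "\<mu> \<le> 1"
    and nu: "0 \<le> \<nu>" "\<nu> * d \<le> \<mu>/2"
  shows "x + \<mu> *\<^sub>R (centre - x) + \<nu> *\<^sub>R E \<in> unit_square"
  unfolding unit_square_def mem_box_cart
proof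
  fix i
  have xi: "0 \<le> x$i" "x$i \<le> 1" using x unfolding unit_square_def mem_box_cart by auto
  have "\<bar>E$i\<bar> \<le> d" using component_le_norm_cart[of E i] nE by simp
  then have "\<bar>\<nu> * E$i\<bar> \<le> \<nu> * d" using nu by (simp add: abs_mult mult_left_mono)
  then have ei: "- (\<mu>/2) \<le> \<nu> * E$i" "\<nu> * E$i \<le> \<mu>/2" using nu by linarith+
  have z: "(x + \<mu> *\<^sub>R (centre - x) + \<nu> *\<^sub>R E) $ i = (1-\<mu>) * x$i + \<mu>/2 + \<nu> * E$i"
    by (simp add: centre_nth algebra_simps)
  have "0 \<le> (1-\<mu>) * x$i" using xi mu by simp
  moreover have "(1-\<mu>) * x$i \<le> 1 - \<mu>" using xi mu by (simp add: mult_left_le)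
  ultimately show "0 $ i \<le> (x + \<mu> *\<^sub>R (centre - x) + \<nu> *\<^sub>R E) $ i \<and>
     (x + \<mu> *\<^sub>R (centre - x) + \<nu> *\<^sub>R E) $ i \<le> 1 $ i"
    unfolding z using ei by simp
qed

lemma in_cball:
  fixes D E :: "real^2"
  assumes d: "d > 0" and DD: "D \<bullet> D = d^2" and EE: "E \<bullet> E = d^2" and DE: "D \<bullet> E = 0"
    and mu: "0 \<le> \<mu>" "\<mu> \<le> 1" and nu: "0 \<le> \<nu>" "3 * \<nu> \<le> \<mu>"
  shows "norm ((\<mu> - 1) *\<^sub>R D + \<nu> *\<^sub>R E) \<le> d"
proof -
  have eq: "(norm ((\<mu> - 1) *\<^sub>R D + \<nu> *\<^sub>R E))^2 = ((1-\<mu>)^2 + \<nu>^2) * d^2"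
    unfolding power2_norm_eq_inner using DD EE DE
    by (simp add: inner_add_left inner_add_right inner_commute algebra_simps power2_eq_square)
  have "\<nu>^2 \<le> (\<mu>/3)^2" using nu by (intro power_mono) auto
  moreover have "(1-\<mu>)^2 + (\<mu>/3)^2 \<le> 1"
  proof -
    have "\<mu> * \<mu> \<le> \<mu> * 1" using mu by (intro mult_left_mono) auto
    moreover have "(1-\<mu>)^2 + (\<mu>/3)^2 = 1 - 2*\<mu> + (10/9)*(\<mu>*\<mu>)" by (simp add: power2_eq_square algebra_simps)
    ultimately show ?thesis using mu by linarith
  qed
  ultimately have "(1-\<mu>)^2 + \<nu>^2 \<le> 1" by linarith
  then have "(norm ((\<mu> - 1) *\<^sub>R D + \<nu> *\<^sub>R E))^2 \<le> d^2"
    unfolding eq using d by (simp add: mult_left_le_one_le)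
  then show ?thesis using power2_le_imp_le[OF _ less_imp_le[OF d]] by blast
qed

theorem mainTheorem12:
  shows "\<exists>a>0. \<forall>r x. 0 < r \<and> r \<le> sqrt 2 \<and> x \<in> unit_square \<and> norm (x - centre) \<ge> r / 2
     \<longrightarrow> measure lebesgue (W x centre r \<inter> unit_square \<inter> cball centre (norm (x - centre))) \<ge> a * r ^ 5"
proof (intro exI[of _ "1/384"] conjI allI impI)
  show "(0::real) < 1/384" by simp
  fix r :: real and x :: "real^2"
  assume H: "0 < r \<and> r \<le> sqrt 2 \<and> x \<in> unit_square \<and> norm (x - centre) \<ge> r / 2"
  then have r: "0 < r" "r \<le> sqrt 2" and x: "x \<in> unit_square" and rd: "r \<le> 2 * norm (x - centre)" by auto
  define d where "d = norm (x - centre)"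
  define D where "D = centre - x"
  define E :: "real^2" where "E = vector [-(D$2), D$1]"
  define m where "m = r^2/(8*d^2)"
  define b where "b = r^3/(48*d^3)"
  define f where "f = (\<lambda>y::real^2. (m * y$1) *\<^sub>R D + (b * y$2) *\<^sub>R E)"
  define T where "T = W x centre r \<inter> unit_square \<inter> cball centre d"
  define R where "R = (+) (x + m *\<^sub>R D) ` (f ` cbox 0 1)"
  have d: "d > 0" using r rd unfolding d_def by linarith
  have r2: "r \<le> 2*d" using rd unfolding d_def by simp
  have nD: "norm D = d" unfolding d_def D_def by (simp add: norm_minus_commute)
  have DD: "D \<bullet> D = d^2" using nD power2_norm_eq_inner[of D] by simp
  have DDc: "D \<bullet> D = D$1*D$1 + D$2*D$2" by (simp add: inner_vec_def sum_2)
  have EE: "E \<bullet> E = d^2" using DD DDc by (simp add: E_def inner_vec_def sum_2)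
  have DE: "D \<bullet> E = 0" by (simp add: E_def inner_vec_def sum_2)
  have nE: "norm E = d" using EE d by (metis norm_eq_sqrt_inner real_sqrt_abs abs_of_pos)
  have d1: "d \<le> 1"
  proof -
    have "\<bar>(x - centre)$i\<bar> \<le> 1/2" for i
      proof -
      have "0 \<le> x$i" "x$i \<le> 1" using x unfolding unit_square_def mem_box_cart by auto
      then show ?thesis by (simp add: centre_nth split: abs_split)
    qed
    then have "sum (\<lambda>i. \<bar>(x - centre)$i\<bar>) UNIV \<le> 1/2 + 1/2" unfolding sum_2 by (intro add_mono)
    then show ?thesis using norm_le_l1_cart[of "x - centre"] unfolding d_def by linarith
  qed
  have r3: "r \<le> 2"
  proof -
    have "sqrt 2 \<le> 2" using real_sqrt_le_mono[of 2 4] by simp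
    then show ?thesis using r by linarith
  qed
  have sub: "R \<subseteq> T"
  proof
    fix z assume "z \<in> R"
    then obtain y where y: "y \<in> cbox (0::real^2) 1" and z: "z = x + m *\<^sub>R D + f y"
      unfolding R_def by auto
    have y1: "0 \<le> y$1" "y$1 \<le> 1" "0 \<le> y$2" "y$2 \<le> 1" using y unfolding mem_box_cart by auto
    define \<mu> where "\<mu> = m * (1 + y$1)"
    define \<nu> where "\<nu> = b * y$2"
    have z': "z = x + \<mu> *\<^sub>R D + \<nu> *\<^sub>R E"
      unfolding z f_def \<mu>_def \<nu>_def by (simp add: algebra_simps scaleR_add_left)
    have m0: "0 \<le> m" unfolding m_def by simp
    have b0: "0 \<le> b" unfolding b_def using d r by simp
    have "m*1 \<le> m*(1+y$1)" using m0 y1 by (intro mult_left_mono) auto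
    then have mu1: "m \<le> \<mu>" unfolding \<mu>_def by simp
    have "m*(1+y$1) \<le> m*2" using m0 y1 by (intro mult_left_mono) auto
    then have mu2: "\<mu> \<le> 2*m" unfolding \<mu>_def by simp
    have "b*y$2 \<le> b*1" using b0 y1 by (intro mult_left_mono) auto
    then have nu1: "0 \<le> \<nu>" "\<nu> \<le> b" unfolding \<nu>_def using b0 y1 by auto
    have m2: "2*m = r^2/(4*d^2)" unfolding m_def by simp
    have mhalf: "2*m \<le> 1"
    proof -
      have "r^2 \<le> (2*d)^2" using r r2 by (intro power_mono) auto
      then show ?thesis unfolding m2 using d by (simp add: power_mult_distrib)
    qed
    have mu0: "0 \<le> \<mu>" "\<mu> \<le> 1" using mu1 mu2 m0 mhalf by linarith+
    have bd: "b * d = m * r / 6" unfolding b_def m_def using d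
      by (simp add: field_simps power2_eq_square power3_eq_cube)
    have nud: "\<nu> * d \<le> \<mu> * r / 6"
    proof -
      have "\<nu> * d \<le> b * d" using nu1 d by (simp add: mult_right_mono)
      also have "\<dots> = m * r / 6" by (rule bd)
      also have "\<dots> \<le> \<mu> * r / 6" using mu1 r by (simp add: mult_right_mono divide_right_mono)
      finally show ?thesis .
    qed
    have nu3: "3 * \<nu> \<le> \<mu>"
    proof -
      have "\<mu> * r \<le> \<mu> * (2*d)" using mu0 r2 by (simp add: mult_left_mono)
      then have "\<nu> * d \<le> \<mu> * d / 3" using nud by linarith
      then have "(3*\<nu>) * d \<le> \<mu> * d" by simp
      then show ?thesis using d by simp
    qed
    have nusq: "\<nu> * d \<le> \<mu>/2"
    proof -
      have "\<mu> * r \<le> \<mu> * 2" using mu0 r3 by (simp add: mult_left_mono)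
      then show ?thesis using nud mu0 by linarith
    qed
    have "z \<in> W x centre r"
      unfolding W_def
    proof (safe)
      fix p assume p1: "p \<in> cball x r" and p2: "p \<in> cball centre (norm (x - centre))"
      have "norm (p - (x + \<mu> *\<^sub>R D + \<nu> *\<^sub>R E)) \<le> r"
      proof (rule key_W[OF d DD EE DE r(1) r2])
        show "r^2/(8*d^2) \<le> \<mu>" using mu1 unfolding m_def .
        show "\<mu> \<le> r^2/(4*d^2)" using mu2 m2 by simp
        show "0 \<le> \<nu>" by (rule nu1)
        show "\<nu> \<le> r^3/(48*d^3)" using nu1 unfolding b_def by simp
        show "norm (p - x) \<le> r" using p1 by (simp add: dist_norm norm_minus_commute)
        show "norm (p - (x + D)) \<le> d" using p2 unfolding D_def d_def by (simp add: dist_norm norm_minus_commute)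
      qed
      then show "p \<in> cball z r" unfolding z' by (simp add: dist_norm norm_minus_commute)
    qed
    moreover have "z \<in> unit_square"
      unfolding z' D_def by (rule in_square[OF x nE mu0 nu1(1) nusq])
    moreover have "z \<in> cball centre d"
    proof -
      have "centre - z = - ((\<mu> - 1) *\<^sub>R D + \<nu> *\<^sub>R E)" unfolding z' D_def by (simp add: algebra_simps)
      then have "dist centre z = norm ((\<mu> - 1) *\<^sub>R D + \<nu> *\<^sub>R E)" unfolding dist_norm by (simp only: norm_minus_cancel)
      then show ?thesis using in_cball[OF d DD EE DE mu0 nu1(1) nu3] by simp
    qed
    ultimately show "z \<in> T" unfolding T_def by blast
  qed
  have linf: "linear f" unfolding f_def by (auto intro!: linearI simp: algebra_simps)
  have fm: "f ` cbox 0 1 \<in> lmeasurable" by (rule measurable_linear_image[OF linf lmeasurable_cbox])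
  have Rm: "R \<in> lmeasurable" unfolding R_def by (rule measurable_translation[OF fm])
  have "compact T" unfolding T_def unit_square_def
    by (intro closed_Int_compact compact_Int_closed W_closed compact_cbox compact_cball) (auto intro: W_closed)
  then have Tm: "T \<in> lmeasurable" by (rule lmeasurable_compact)
  have "measure lebesgue R = measure lebesgue (f ` cbox 0 1)" unfolding R_def by (rule measure_translation)
  also have "\<dots> = \<bar>det (matrix f)\<bar> * 1" using measure_linear_image[OF linf lmeasurable_cbox] cbox01_measure by simp
  also have "\<dots> = m * b * d^2"
  proof -
    have "det (matrix f) = m*b*(D$1*E$2 - D$2*E$1)" unfolding f_def by (rule det_f)
    also have "\<dots> = m*b*d^2" using DD DDc by (simp add: E_def)
    moreover have "0 \<le> m*b*d^2" using d r unfolding m_def b_def by simp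
    ultimately show ?thesis by simp
  qed
  also have "\<dots> = r^5 / (384 * d^3)" unfolding m_def b_def using d
    by (simp add: field_simps power2_eq_square power3_eq_cube numeral_eq_Suc)
  also have "\<dots> \<ge> 1/384 * r^5"
  proof -
    have "d^3 \<le> 1" using d d1 by (simp add: power_le_one)
    then have "r^5 / 384 \<le> r^5 / (384 * d^3)" using d r by (intro divide_left_mono) auto
    then show ?thesis by simp
  qed
  finally have "1/384 * r^5 \<le> measure lebesgue R" .
  also have "\<dots> \<le> measure lebesgue T" using measure_mono_fmeasurable[OF sub fmeasurableD[OF Rm] Tm] .
  finally show "1/384 * r^5 \<le> measure lebesgue (W x centre r \<inter> unit_square \<inter> cball centre (norm (x - centre)))"
    unfolding T_def d_def .
qed

end
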